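(* Let $\Gamma_M$ ($M>0$) be a family of nonatomic routing games with a single OD pair with demand $M$, sharing the same graph, path set and edge costs $(c_e)_{e\in\mathcal E}$, where each $c_e$ is analytic at $0$, i.e. coincides with a convergent power series $\sum_{k\ge 0}c_{k,e}x^k$ on some interval $[0,\delta_e)$, $\delta_e>0$. Then $\mathrm{PoA}(\Gamma_M)\to 1$ as $M\to 0$.
   Context: A nonatomic routing game with a single OD pair consists of a finite directed multigraph with edge set $\mathcal E$, a nonempty finite set $\mathcal P$ of paths from an origin to a destination, a demand $M>0$, and continuous nondecreasing edge costs $c_e:[0,\infty)\to[0,\infty)$. Feasible flows: $f\in\mathbb R_+^{\mathcal P}$ with $\sum_p f_p=M$; loads $x_e=\sum_{p\ni e}f_p$; path costs $c_p(f)=\sum_{e\in p}c_e(x_e)$. A Wardrop equilibrium is a feasible $f^*$ with $c_p(f^* )\le c_{p'}(f^* )$ whenever $f^*_p>0$. Social cost $L(x)=\sum_e x_ec_e(x_e)$; $\mathrm{Opt}$ is its minimum over feasible loads, $\mathrm{Eq}=L(x^* )$ at an equilibrium load, and $\mathrm{PoA}=\mathrm{Eq}/\mathrm{Opt}$; it is assumed that $\mathrm{Opt}>0$ (otherwise $\mathrm{PoA}:=1$). *)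

theory Defs
  imports "HOL-Analysis.Analysis"
begin

text \<open>Edges of the multigraph are elements
  of a finite set E (of an arbitrary edge type); paths are indices in a finite
  set P, and pe p is the set of edges of path p. Flows are functions on paths.\<close>

definition feasible :: "'p set \<Rightarrow> real \<Rightarrow> ('p \<Rightarrow> real) \<Rightarrow> bool" where
  "feasible P M f \<longleftrightarrow> (\<forall>p\<in>P. 0 \<le> f p) \<and> (\<Sum>p\<in>P. f p) = M"

definition load :: "'p set \<Rightarrow> ('p \<Rightarrow> 'e set) \<Rightarrow> ('p \<Rightarrow> real) \<Rightarrow> 'e \<Rightarrow> real" where
  "load P pe f e = (\<Sum>p\<in>{p\<in>P. e \<in> pe p}. f p)"

definition path_cost :: "'p set \<Rightarrow> ('p \<Rightarrow> 'e set) \<Rightarrow> ('e \<Rightarrow> real \<Rightarrow> real)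
    \<Rightarrow> ('p \<Rightarrow> real) \<Rightarrow> 'p \<Rightarrow> real" where
  "path_cost P pe c f p = (\<Sum>e\<in>pe p. c e (load P pe f e))"

definition wardrop_eq :: "'p set \<Rightarrow> ('p \<Rightarrow> 'e set) \<Rightarrow> ('e \<Rightarrow> real \<Rightarrow> real)
    \<Rightarrow> real \<Rightarrow> ('p \<Rightarrow> real) \<Rightarrow> bool" where
  "wardrop_eq P pe c M f \<longleftrightarrow> feasible P M f \<and>
     (\<forall>p\<in>P. \<forall>p'\<in>P. 0 < f p \<longrightarrow> path_cost P pe c f p \<le> path_cost P pe c f p')"

definition social_cost :: "'e set \<Rightarrow> 'p set \<Rightarrow> ('p \<Rightarrow> 'e set) \<Rightarrow> ('e \<Rightarrow> real \<Rightarrow> real)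
    \<Rightarrow> ('p \<Rightarrow> real) \<Rightarrow> real" where
  "social_cost E P pe c f = (\<Sum>e\<in>E. load P pe f e * c e (load P pe f e))"

definition opt_cost :: "'e set \<Rightarrow> 'p set \<Rightarrow> ('p \<Rightarrow> 'e set) \<Rightarrow> ('e \<Rightarrow> real \<Rightarrow> real)
    \<Rightarrow> real \<Rightarrow> real" where
  "opt_cost E P pe c M = Inf (social_cost E P pe c ` {f. feasible P M f})"

definition poa :: "'e set \<Rightarrow> 'p set \<Rightarrow> ('p \<Rightarrow> 'e set) \<Rightarrow> ('e \<Rightarrow> real \<Rightarrow> real)
    \<Rightarrow> real \<Rightarrow> ('p \<Rightarrow> real) \<Rightarrow> real" where
  "poa E P pe c M f = (if 0 < opt_cost E P pe c M
      then social_cost E P pe c f / opt_cost E P pe c M else 1)"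

definition analytic_at_zero :: "(real \<Rightarrow> real) \<Rightarrow> bool" where
  "analytic_at_zero g \<longleftrightarrow> (\<exists>\<delta>>0. \<exists>a::nat \<Rightarrow> real.
      \<forall>x. 0 \<le> x \<and> x < \<delta> \<longrightarrow> (\<lambda>k. a k * x ^ k) sums g x)"

end

theory Submission
  imports Defs
begin

lemma young_pow:
  fixes y v :: real and d :: nat
  assumes "0 \<le> y" "0 \<le> v"
  shows "real (Suc d) * y * v ^ d \<le> y ^ Suc d + real d * v ^ Suc d"
proof (cases "v = 0")
  case True
  then show ?thesis using assms by (cases d) auto
next
  case False
  hence vp: "v > 0" using assms by auto
  have "1 + real (Suc d) * (y / v - 1) \<le> (1 + (y/v - 1)) ^ Suc d"
    by (rule Bernoulli_inequality) (use assms vp in auto)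
  hence "1 + real (Suc d) * (y / v - 1) \<le> (y/v) ^ Suc d" by simp
  hence "v ^ Suc d * (1 + real (Suc d) * (y / v - 1)) \<le> v ^ Suc d * (y/v) ^ Suc d"
    using vp by (intro mult_left_mono) auto
  also have "v ^ Suc d * (y/v) ^ Suc d = y ^ Suc d" using vp
    by (simp add: power_divide)
  also have "v ^ Suc d * (1 + real (Suc d) * (y / v - 1)) =
      v ^ Suc d + real (Suc d) * (y * v ^ d - v ^ Suc d)"
    using vp by (simp add: field_simps)
  finally show ?thesis by (simp add: algebra_simps)
qed

lemma sums_abs_le:
  fixes u v :: "nat \<Rightarrow> real"
  assumes "u sums s" "v sums t" "\<And>k. \<bar>u k\<bar> \<le> v k"
  shows "\<bar>s\<bar> \<le> t"
proof -
  have "s \<le> t" by (rule sums_le[OF _ assms(1,2)]) (use assms(3) abs_le_D1 in blast)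
  moreover have "-s \<le> t"
    by (rule sums_le[OF _ sums_minus[OF assms(1)] assms(2)]) (use assms(3) abs_le_D2 in blast)
  ultimately show ?thesis by linarith
qed

lemma ps_local:
  fixes a :: "nat \<Rightarrow> real" and g :: "real \<Rightarrow> real"
  assumes dpos: "\<delta> > 0"
    and S: "\<forall>x. 0 \<le> x \<and> x < \<delta> \<longrightarrow> (\<lambda>k. a k * x ^ k) sums g x"
    and Z: "\<forall>k<d. a k = 0"
  shows "\<exists>B \<rho>. 0 \<le> B \<and> 0 < \<rho> \<and> (\<forall>y. 0 \<le> y \<and> y \<le> \<rho> \<longrightarrow> \<bar>g y - a d * y ^ d\<bar> \<le> B * y ^ Suc d)"
proof -
  define r where "r = \<delta> / 2"
  have rp: "r > 0" "r < \<delta>" using dpos by (auto simp: r_def)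
  have "summable (\<lambda>k. a k * r ^ k)" using S rp by (auto simp: sums_iff)
  hence "(\<lambda>k. a k * r ^ k) \<longlonglongrightarrow> 0" by (rule summable_LIMSEQ_zero)
  hence "Bseq (\<lambda>k. a k * r ^ k)" by (rule convergent_imp_Bseq[OF convergentI])
  then obtain T where T: "T > 0" "\<And>k. norm (a k * r ^ k) \<le> T" by (auto elim: BseqE)
  define B where "B = 2 * T / r ^ Suc d"
  have "0 \<le> B" using T rp by (simp add: B_def)
  moreover have "\<forall>y. 0 \<le> y \<and> y \<le> r/2 \<longrightarrow> \<bar>g y - a d * y ^ d\<bar> \<le> B * y ^ Suc d"
  proof (intro allI impI)
    fix y :: real assume y: "0 \<le> y \<and> y \<le> r/2"
    define q where "q = y / r"
    have q: "0 \<le> q" "q \<le> 1/2" using y rp by (auto simp: q_def field_simps)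
    have "(\<lambda>k. a k * y ^ k) sums g y" using S y rp by auto
    hence s1: "(\<lambda>k. a (k + Suc d) * y ^ (k + Suc d)) sums (g y - (\<Sum>k<Suc d. a k * y ^ k))"
      by (rule sums_split_initial_segment)
    have "(\<Sum>k<Suc d. a k * y ^ k) = a d * y ^ d" using Z by simp
    hence s1': "(\<lambda>k. a (k + Suc d) * y ^ (k + Suc d)) sums (g y - a d * y ^ d)" using s1 by simp
    have s2: "(\<lambda>k. T * q ^ Suc d * (1/2) ^ k) sums (T * q ^ Suc d * (1 / (1 - 1/2)))"
      by (intro sums_mult geometric_sums) simp
    have bnd: "\<bar>a (k + Suc d) * y ^ (k + Suc d)\<bar> \<le> T * q ^ Suc d * (1/2) ^ k" for k
    proof -
      have yy: "y = r * q" using rp by (simp add: q_def)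
      have "\<bar>a (k + Suc d) * y ^ (k + Suc d)\<bar> = \<bar>a (k + Suc d) * r ^ (k + Suc d)\<bar> * q ^ (k + Suc d)"
        using q by (simp add: yy power_mult_distrib abs_mult)
      also have "\<dots> \<le> T * q ^ (k + Suc d)"
        using T(2)[of "k + Suc d"] q by (intro mult_right_mono) auto
      also have "q ^ (k + Suc d) = q ^ Suc d * q ^ k" by (simp add: power_add)
      also have "q ^ k \<le> (1/2) ^ k" using q by (intro power_mono) auto
      hence "T * (q ^ Suc d * q ^ k) \<le> T * (q ^ Suc d * (1/2) ^ k)"
        using T q by (intro mult_left_mono) auto
      finally show ?thesis by simp
    qed
    have "\<bar>g y - a d * y ^ d\<bar> \<le> T * q ^ Suc d * (1 / (1 - 1/2))"
      by (rule sums_abs_le[OF s1' s2 bnd])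
    also have "\<dots> = B * y ^ Suc d" using rp
      by (simp add: B_def q_def power_divide)
    finally show "\<bar>g y - a d * y ^ d\<bar> \<le> B * y ^ Suc d" .
  qed
  ultimately show ?thesis using rp by (intro exI[of _ B] exI[of _ "r/2"]) auto
qed

lemma edge_profile:
  fixes g :: "real \<Rightarrow> real"
  assumes "analytic_at_zero g" and nn: "\<forall>y\<ge>0. 0 \<le> g y"
  shows "(\<exists>\<rho>>0. \<forall>y. 0 \<le> y \<and> y \<le> \<rho> \<longrightarrow> g y = 0) \<or>
    (\<exists>d \<alpha> B \<rho>. 0 < \<alpha> \<and> 0 \<le> B \<and> 0 < \<rho> \<and>
        (\<forall>y. 0 \<le> y \<and> y \<le> \<rho> \<longrightarrow> \<bar>g y - \<alpha> * y ^ d\<bar> \<le> B * y ^ Suc d))"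
proof -
  obtain \<delta> a where dp: "\<delta> > 0" and S: "\<forall>x. 0 \<le> x \<and> x < \<delta> \<longrightarrow> (\<lambda>k. a k * x ^ k) sums g x"
    using assms(1) unfolding analytic_at_zero_def by blast
  show ?thesis
  proof (cases "\<forall>k. a k = 0")
    case True
    have "\<forall>y. 0 \<le> y \<and> y \<le> \<delta>/2 \<longrightarrow> g y = 0"
    proof (intro allI impI)
      fix y :: real assume "0 \<le> y \<and> y \<le> \<delta>/2"
      hence "(\<lambda>k. a k * y ^ k) sums g y" using S dp by auto
      hence "(\<lambda>k. 0::real) sums g y" using True by simp
      thus "g y = 0" using sums_zero sums_unique2 by blast
    qed
    thus ?thesis using dp by (intro disjI1 exI[of _ "\<delta>/2"]) auto
  next
    case False
    define d where "d = (LEAST k. a k \<noteq> 0)"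
    have ad: "a d \<noteq> 0" using False LeastI_ex[of "\<lambda>k. a k \<noteq> 0"] unfolding d_def by auto
    have Zk: "\<forall>k<d. a k = 0" unfolding d_def using not_less_Least by blast
    obtain B \<rho> where B: "0 \<le> B" "0 < \<rho>"
      and est: "\<forall>y. 0 \<le> y \<and> y \<le> \<rho> \<longrightarrow> \<bar>g y - a d * y ^ d\<bar> \<le> B * y ^ Suc d"
      using ps_local[OF dp S Zk] by blast
    have "a d > 0"
    proof (rule ccontr)
      assume "\<not> a d > 0"
      hence neg: "a d < 0" using ad by auto
      define y where "y = min \<rho> (- a d / (2 * B + 1)) / 2"
      have "- a d / (2 * B + 1) > 0" using neg B by (intro divide_pos_pos) auto
      hence yp: "0 < y" "y \<le> \<rho>" using B by (auto simp: y_def)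
      have "B * y < - a d"
      proof -
        have "y \<le> (- a d / (2 * B + 1)) / 2" unfolding y_def by (intro divide_right_mono) auto
        hence "(2*B+1) * y \<le> (2*B+1) * ((- a d / (2 * B + 1)) / 2)"
          using B by (intro mult_left_mono) auto
        also have "\<dots> = - a d / 2" using B by (simp add: field_simps)
        finally have "(2*B+1) * y \<le> - a d / 2" .
        moreover have "B * y \<le> (2*B+1) * y" using yp B by (simp add: algebra_simps)
        ultimately show ?thesis using neg by linarith
      qed
      have "\<bar>g y - a d * y ^ d\<bar> \<le> B * y ^ Suc d" using est yp by auto
      hence "g y \<le> a d * y ^ d + B * y ^ Suc d" by (simp add: abs_le_iff)
      also have "\<dots> = y ^ d * (a d + B * y)" by (simp add: algebra_simps)
      also have "\<dots> < 0" using yp \<open>B * y < - a d\<close> by (intro mult_pos_neg) auto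
      finally show False using nn yp by (meson less_imp_le not_le)
    qed
    thus ?thesis using B est by blast
  qed
qed

lemma load_swap:
  assumes "finite P" "finite E" "\<forall>p\<in>P. pe p \<subseteq> E"
  shows "(\<Sum>e\<in>E. load P pe g e * h e) = (\<Sum>p\<in>P. g p * (\<Sum>e\<in>pe p. h e))"
proof -
  have "(\<Sum>e\<in>E. load P pe g e * h e) = (\<Sum>e\<in>E. \<Sum>p\<in>P. (if e \<in> pe p then g p * h e else 0))"
  proof (rule sum.cong[OF refl])
    fix e
    have "load P pe g e * h e = (\<Sum>p\<in>{p\<in>P. e \<in> pe p}. g p * h e)"
      unfolding load_def by (simp add: sum_distrib_right)
    also have "\<dots> = (\<Sum>p\<in>P. (if e \<in> pe p then g p * h e else 0))"
      using assms(1) by (simp add: sum.inter_filter)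
    finally show "load P pe g e * h e = (\<Sum>p\<in>P. (if e \<in> pe p then g p * h e else 0))" .
  qed
  also have "\<dots> = (\<Sum>p\<in>P. \<Sum>e\<in>E. (if e \<in> pe p then g p * h e else 0))" by (rule sum.swap)
  also have "\<dots> = (\<Sum>p\<in>P. g p * (\<Sum>e\<in>pe p. h e))"
  proof (rule sum.cong[OF refl])
    fix p assume "p \<in> P"
    hence "{e\<in>E. e \<in> pe p} = pe p" using assms by auto
    hence "(\<Sum>e\<in>E. (if e \<in> pe p then g p * h e else 0)) = (\<Sum>e\<in>pe p. g p * h e)"
      using assms(2) by (simp add: sum.inter_filter[symmetric])
    thus "(\<Sum>e\<in>E. (if e \<in> pe p then g p * h e else 0)) = g p * (\<Sum>e\<in>pe p. h e)"
      by (simp add: sum_distrib_left)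
  qed
  finally show ?thesis .
qed

lemma social_paths:
  assumes "finite P" "finite E" "\<forall>p\<in>P. pe p \<subseteq> E"
  shows "social_cost E P pe c g = (\<Sum>p\<in>P. g p * path_cost P pe c g p)"
  unfolding social_cost_def path_cost_def by (rule load_swap[OF assms])

lemma load_nonneg: "feasible P M g \<Longrightarrow> 0 \<le> load P pe g e"
  unfolding feasible_def load_def by (auto intro: sum_nonneg)

lemma load_le: "finite P \<Longrightarrow> feasible P M g \<Longrightarrow> load P pe g e \<le> M"
  unfolding feasible_def load_def
  using sum_mono2[of P "{p\<in>P. e \<in> pe p}" g] by auto

lemma load_ge: "finite P \<Longrightarrow> feasible P M g \<Longrightarrow> p \<in> P \<Longrightarrow> e \<in> pe p \<Longrightarrow> g p \<le> load P pe g e"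
  unfolding feasible_def load_def
  by (intro member_le_sum) auto

lemma pow_le_M: "0 \<le> (y::real) \<Longrightarrow> y \<le> M \<Longrightarrow> y ^ n \<le> M ^ n"
  by (rule power_mono)

lemma dstar_edge:
  fixes \<alpha> B K v yy cv cy w M \<theta> :: real and dd :: nat
  assumes v: "0 \<le> v" "v \<le> M" and y: "0 \<le> yy" "yy \<le> M" and M1: "M \<le> 1"
    and B: "0 \<le> B" and a: "0 < \<alpha>" and K: "K = real (Suc dd)"
    and w: "w \<le> K * cv"
    and cv1: "cv \<le> \<alpha> * v ^ dd + B * v ^ Suc dd"
    and cv2: "\<alpha> * v ^ dd - B * v ^ Suc dd \<le> cv"
    and cy: "\<alpha> * yy ^ dd - B * yy ^ Suc dd \<le> cy"
    and th: "2 * K * B * M \<le> \<theta>"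
  shows "yy * (w - cy) \<le> real dd * (v * cv) + \<theta> * M ^ Suc dd"
proof -
  have M0: "0 \<le> M" using v by linarith
  have "yy * (w - cy) \<le> yy * (K * cv - cy)" using w y by (intro mult_left_mono) auto
  also have "\<dots> = K * (yy * cv) - yy * cy" by (simp add: algebra_simps)
  also have "\<dots> \<le> K * (yy * (\<alpha> * v ^ dd + B * v ^ Suc dd)) - yy * (\<alpha> * yy ^ dd - B * yy ^ Suc dd)"
  proof -
    have "K * (yy * cv) \<le> K * (yy * (\<alpha> * v ^ dd + B * v ^ Suc dd))"
      using K y cv1 by (intro mult_left_mono) auto
    moreover have "yy * (\<alpha> * yy ^ dd - B * yy ^ Suc dd) \<le> yy * cy"
      using y cy by (intro mult_left_mono) auto
    ultimately show ?thesis by linarith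
  qed
  also have "\<dots> = \<alpha> * (K * yy * v ^ dd - yy ^ Suc dd) + B * (K * (yy * v ^ Suc dd) + yy ^ Suc (Suc dd))"
    by (simp add: algebra_simps)
  also have "\<dots> \<le> \<alpha> * (real dd * v ^ Suc dd) + B * (K * M ^ Suc (Suc dd) + M ^ Suc (Suc dd))"
  proof -
    have "K * yy * v ^ dd \<le> yy ^ Suc dd + real dd * v ^ Suc dd"
      using young_pow[OF y(1) v(1), of dd] K by simp
    hence 1: "\<alpha> * (K * yy * v ^ dd - yy ^ Suc dd) \<le> \<alpha> * (real dd * v ^ Suc dd)"
      using a by (intro mult_left_mono) auto
    have "yy * v ^ Suc dd \<le> M * M ^ Suc dd"
      using y v by (intro mult_mono pow_le_M) auto
    hence "K * (yy * v ^ Suc dd) \<le> K * M ^ Suc (Suc dd)" using K by (intro mult_left_mono) auto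
    moreover have "yy ^ Suc (Suc dd) \<le> M ^ Suc (Suc dd)" using y by (intro pow_le_M) auto
    ultimately have "B * (K * (yy * v ^ Suc dd) + yy ^ Suc (Suc dd)) \<le> B * (K * M ^ Suc (Suc dd) + M ^ Suc (Suc dd))"
      using B by (intro mult_left_mono) auto
    with 1 show ?thesis by linarith
  qed
  also have "\<alpha> * (real dd * v ^ Suc dd) = real dd * (v * (\<alpha> * v ^ dd))" by (simp add: algebra_simps)
  also have "\<dots> \<le> real dd * (v * (cv + B * v ^ Suc dd))"
    using cv2 v by (intro mult_left_mono) auto
  also have "\<dots> = real dd * (v * cv) + real dd * B * (v * v ^ Suc dd)" by (simp add: algebra_simps)
  also have "\<dots> \<le> real dd * (v * cv) + real dd * B * M ^ Suc (Suc dd)"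
  proof -
    have "v * v ^ Suc dd \<le> M * M ^ Suc dd" using v by (intro mult_mono pow_le_M) auto
    thus ?thesis using B by (simp add: mult_left_mono)
  qed
  finally have "yy * (w - cy) \<le> real dd * (v * cv) + (real dd + K + 1) * B * M ^ Suc (Suc dd)"
    by (simp add: algebra_simps)
  also have "(real dd + K + 1) * B * M ^ Suc (Suc dd) = (2 * K * B * M) * M ^ Suc dd"
    using K by (simp add: algebra_simps)
  also have "\<dots> \<le> \<theta> * M ^ Suc dd" using th M0 by (intro mult_right_mono) auto
  finally show ?thesis by simp
qed

lemma main_caseB:
  fixes E :: "'e set" and P :: "'p set" and pe :: "'p \<Rightarrow> 'e set"
    and c :: "'e \<Rightarrow> real \<Rightarrow> real" and Z :: "'e set" and d :: "'e \<Rightarrow> nat"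
    and \<alpha> :: "'e \<Rightarrow> real"
  assumes fE: "finite E" and fP: "finite P" and Pne: "P \<noteq> {}"
    and peE: "\<forall>p\<in>P. pe p \<subseteq> E"
    and nn: "\<forall>e\<in>E. \<forall>x\<ge>0. 0 \<le> c e x"
    and Zz: "\<forall>e\<in>Z. \<forall>y. 0 \<le> y \<and> y \<le> \<rho>0 \<longrightarrow> c e y = 0"
    and est: "\<forall>e\<in>E-Z. \<forall>y. 0 \<le> y \<and> y \<le> \<rho>0 \<longrightarrow> \<bar>c e y - \<alpha> e * y ^ d e\<bar> \<le> B * y ^ Suc (d e)"
    and \<rho>0: "0 < \<rho>0" "\<rho>0 \<le> 1" and B: "0 \<le> B"
    and alo: "0 < \<alpha>lo" and ahi: "0 \<le> \<alpha>hi"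
    and abnd: "\<forall>e\<in>E-Z. \<alpha>lo \<le> \<alpha> e \<and> \<alpha> e \<le> \<alpha>hi"
    and p0: "p0 \<in> P" "\<forall>e\<in>pe p0. e \<in> Z \<or> ds \<le> d e"
    and cut: "\<forall>p\<in>P. \<exists>e\<in>pe p. e \<notin> Z \<and> d e \<le> ds"
    and eta: "0 < \<eta>"
  shows "\<exists>M0>0. \<forall>M f. 0 < M \<and> M < M0 \<and> wardrop_eq P pe c M f \<longrightarrow>
     0 < social_cost E P pe c f \<and>
     (\<forall>g. feasible P M g \<longrightarrow> (1 - \<eta>) * social_cost E P pe c f \<le> social_cost E P pe c g)"
proof -
  define nP where "nP = real (card P)"
  define nE where "nE = real (card E)"
  have nP1: "1 \<le> nP" using fP Pne by (simp add: nP_def Suc_leI card_gt_0_iff)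
  have nE0: "0 \<le> nE" by (simp add: nE_def)
  define cup where "cup = (nE + 1) * (\<alpha>hi + B + 1)"
  define clo where "clo = (\<alpha>lo / 2) / nP ^ ds"
  define \<theta> where "\<theta> = \<eta> * clo / (nE + 1)"
  define K where "K = real (Suc ds)"
  define \<epsilon>' where "\<epsilon>' = min 1 (\<theta> / (K * cup))"
  define M0 where "M0 = min \<rho>0 (min (\<alpha>lo / (2 * B + 1)) (min (\<theta> / (2 * K * B + 1))
      (min (\<theta> / (K * (\<alpha>hi + B) + 1)) (\<alpha>lo * \<epsilon>' ^ ds / (2 * K * cup)))))"
  have cup0: "0 < cup" using nE0 B ahi by (simp add: cup_def)
  have clo0: "0 < clo" using alo nP1 by (simp add: clo_def)
  have th0: "0 < \<theta>" using eta clo0 nE0 by (simp add: \<theta>_def)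
  have K1: "1 \<le> K" by (simp add: K_def)
  have ep0: "0 < \<epsilon>'" "\<epsilon>' \<le> 1" using th0 K1 cup0 by (auto simp: \<epsilon>'_def)
  have dpos: "0 < 2 * K * B + 1" "0 < K * (\<alpha>hi + B) + 1" using K1 B ahi by (auto intro: add_nonneg_pos)
  hence "0 < M0" using \<rho>0 alo B th0 K1 cup0 ahi ep0 by (simp add: M0_def)
  moreover have "0 < M \<and> M < M0 \<and> wardrop_eq P pe c M f \<longrightarrow>
     0 < social_cost E P pe c f \<and>
     (\<forall>g. feasible P M g \<longrightarrow> (1 - \<eta>) * social_cost E P pe c f \<le> social_cost E P pe c g)" for M f
  proof (intro impI)
    assume H: "0 < M \<and> M < M0 \<and> wardrop_eq P pe c M f"
    hence Mp: "0 < M" and MM0: "M < M0" and W: "wardrop_eq P pe c M f" by auto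
    have C1: "M \<le> \<rho>0" "M \<le> 1" using MM0 \<rho>0 by (auto simp: M0_def)
    have C2: "B * M \<le> \<alpha>lo / 2"
    proof -
      have "M < \<alpha>lo / (2 * B + 1)" using MM0 by (simp add: M0_def)
      hence "(2 * B + 1) * M < \<alpha>lo" using B by (simp add: field_simps)
      thus ?thesis using Mp B by (simp add: algebra_simps)
    qed
    have C3: "2 * K * B * M \<le> \<theta>"
    proof -
      have "M < \<theta> / (2 * K * B + 1)" using MM0 by (simp add: M0_def)
      hence "(2 * K * B + 1) * M < \<theta>" using dpos(1) by (simp add: less_divide_eq mult.commute)
      thus ?thesis using Mp by (simp add: algebra_simps)
    qed
    have C4: "K * (\<alpha>hi + B) * M \<le> \<theta>"
    proof -
      have "M < \<theta> / (K * (\<alpha>hi + B) + 1)" using MM0 by (simp add: M0_def)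
      hence "(K * (\<alpha>hi + B) + 1) * M < \<theta>" using dpos(2) by (simp add: less_divide_eq mult.commute)
      thus ?thesis using Mp by (simp add: algebra_simps)
    qed
    have C5: "2 * K * cup * M < \<alpha>lo * \<epsilon>' ^ ds"
    proof -
      have "M < \<alpha>lo * \<epsilon>' ^ ds / (2 * K * cup)" using MM0 by (simp add: M0_def)
      thus ?thesis using K1 cup0 by (simp add: field_simps)
    qed
    have feas: "feasible P M f" using W by (simp add: wardrop_eq_def)
    hence fnn: "\<forall>p\<in>P. 0 \<le> f p" and fsum: "(\<Sum>p\<in>P. f p) = M" by (auto simp: feasible_def)
    define x where "x = load P pe f"
    have x0: "0 \<le> x e" "x e \<le> M" for e
      using load_nonneg[OF feas] load_le[OF fP feas] by (auto simp: x_def)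
    have upper: "c e y \<le> (\<alpha>hi + B) * y ^ d e" if "e \<in> E - Z" "0 \<le> y" "y \<le> M" for e y
    proof -
      have "\<bar>c e y - \<alpha> e * y ^ d e\<bar> \<le> B * y ^ Suc (d e)" using est that C1 by auto
      hence "c e y \<le> \<alpha> e * y ^ d e + B * y ^ Suc (d e)" by (simp add: abs_le_iff)
      also have "B * y ^ Suc (d e) \<le> B * y ^ d e"
        using that C1 B by (intro mult_left_mono power_decreasing) auto
      also have "\<alpha> e * y ^ d e \<le> \<alpha>hi * y ^ d e" using abnd that by (intro mult_right_mono) auto
      finally show ?thesis by (simp add: algebra_simps)
    qed
    have lower: "(\<alpha>lo / 2) * y ^ d e \<le> c e y" if "e \<in> E - Z" "0 \<le> y" "y \<le> M" for e y
    proof -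
      have "\<bar>c e y - \<alpha> e * y ^ d e\<bar> \<le> B * y ^ Suc (d e)" using est that C1 by auto
      hence "\<alpha> e * y ^ d e - B * y ^ Suc (d e) \<le> c e y" by (simp add: abs_le_iff)
      moreover have "(\<alpha>lo / 2) * y ^ d e \<le> \<alpha> e * y ^ d e - B * y ^ Suc (d e)"
      proof -
        have "B * y \<le> \<alpha>lo / 2" using C2 that B by (meson mult_left_mono order_trans)
        moreover have "\<alpha>lo \<le> \<alpha> e" using abnd that by auto
        ultimately have "\<alpha>lo / 2 \<le> \<alpha> e - B * y" by linarith
        hence "(\<alpha>lo / 2) * y ^ d e \<le> (\<alpha> e - B * y) * y ^ d e"
          using that by (intro mult_right_mono) auto
        thus ?thesis by (simp add: algebra_simps)
      qed
      ultimately show ?thesis by linarith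
    qed
    have cnn: "0 \<le> c e y" if "e \<in> E" "0 \<le> y" for e y using nn that by auto
    obtain p1 where p1: "p1 \<in> P" "M / nP \<le> f p1"
    proof -
      have "\<exists>p\<in>P. M / nP \<le> f p"
      proof (rule ccontr)
        assume "\<not> ?thesis"
        hence "\<forall>p\<in>P. f p < M / nP" by auto
        hence "(\<Sum>p\<in>P. f p) < (\<Sum>p\<in>P. M / nP)" using fP Pne by (intro sum_strict_mono) auto
        also have "\<dots> = M" using nP1 by (simp add: nP_def)
        finally show False using fsum by simp
      qed
      thus ?thesis using that by blast
    qed
    have f1: "0 < f p1" using p1 Mp nP1 by (smt (verit) divide_pos_pos)
    define lam where "lam = path_cost P pe c f p1"
    have lam_le: "lam \<le> path_cost P pe c f p" if "p \<in> P" for p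
      using W p1 f1 that by (auto simp: wardrop_eq_def lam_def)
    have lam_eq: "path_cost P pe c f p = lam" if "p \<in> P" "0 < f p" for p
      using W p1 that lam_le[OF that(1)] by (force simp: wardrop_eq_def lam_def)
    have pc_def': "path_cost P pe c f p = (\<Sum>e\<in>pe p. c e (x e))" for p
      by (simp add: path_cost_def x_def)
    have Lf: "social_cost E P pe c f = lam * M"
    proof -
      have "social_cost E P pe c f = (\<Sum>p\<in>P. f p * path_cost P pe c f p)"
        by (rule social_paths[OF fP fE peE])
      also have "\<dots> = (\<Sum>p\<in>P. f p * lam)"
      proof (rule sum.cong[OF refl])
        fix p assume "p \<in> P"
        thus "f p * path_cost P pe c f p = f p * lam"
          using lam_eq fnn by (cases "f p = 0") (auto simp: less_le)
      qed
      also have "\<dots> = (\<Sum>p\<in>P. f p) * lam" by (rule sum_distrib_right[symmetric])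
      also have "\<dots> = lam * M" using fsum by simp
      finally show ?thesis .
    qed
    have lam_up: "lam \<le> cup * M ^ ds"
    proof -
      have "lam \<le> path_cost P pe c f p0" using lam_le p0 by auto
      also have "\<dots> = (\<Sum>e\<in>pe p0. c e (x e))" by (rule pc_def')
      also have "\<dots> \<le> (\<Sum>e\<in>pe p0. (\<alpha>hi + B) * M ^ ds)"
      proof (rule sum_mono)
        fix e assume e: "e \<in> pe p0"
        hence eE: "e \<in> E" using peE p0 by auto
        show "c e (x e) \<le> (\<alpha>hi + B) * M ^ ds"
        proof (cases "e \<in> Z")
          case True
          thus ?thesis using Zz x0[of e] C1 B ahi Mp by auto
        next
          case False
          hence "ds \<le> d e" using p0 e by auto
          have "c e (x e) \<le> (\<alpha>hi + B) * x e ^ d e" using upper[of e "x e"] False eE x0 by auto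
          also have "\<dots> \<le> (\<alpha>hi + B) * M ^ d e" using x0 B ahi by (intro mult_left_mono power_mono) auto
          also have "\<dots> \<le> (\<alpha>hi + B) * M ^ ds"
            using \<open>ds \<le> d e\<close> C1 Mp B ahi by (intro mult_left_mono power_decreasing) auto
          finally show ?thesis .
        qed
      qed
      also have "\<dots> = real (card (pe p0)) * ((\<alpha>hi + B) * M ^ ds)" by simp
      also have "\<dots> \<le> cup * M ^ ds"
      proof -
        have "card (pe p0) \<le> card E" using peE p0 fE by (intro card_mono) auto
        hence "real (card (pe p0)) \<le> nE + 1" by (simp add: nE_def)
        moreover have "\<alpha>hi + B \<le> \<alpha>hi + B + 1" by simp
        ultimately have "real (card (pe p0)) * (\<alpha>hi + B) \<le> cup"
          unfolding cup_def using B ahi by (intro mult_mono) auto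
        thus ?thesis using Mp by (simp add: mult.assoc[symmetric] mult_right_mono)
      qed
      finally show ?thesis .
    qed
    have lam_lo: "clo * M ^ ds \<le> lam"
    proof -
      obtain e where e: "e \<in> pe p1" "e \<notin> Z" "d e \<le> ds" using cut p1 by blast
      have eE: "e \<in> E" using e peE p1 by auto
      have xe: "M / nP \<le> x e" using load_ge[of P M f p1 e pe, OF fP feas p1(1) e(1)] p1 by (simp add: x_def)
      have "clo * M ^ ds = (\<alpha>lo / 2) * (M / nP) ^ ds" by (simp add: clo_def power_divide)
      also have "\<dots> \<le> (\<alpha>lo / 2) * (M / nP) ^ d e"
        using e nP1 Mp C1 alo by (intro mult_left_mono power_decreasing) (auto simp: field_simps)
      also have "\<dots> \<le> (\<alpha>lo / 2) * x e ^ d e"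
        using xe Mp nP1 alo by (intro mult_left_mono power_mono) auto
      also have "\<dots> \<le> c e (x e)" using lower[of e "x e"] e eE x0 by auto
      also have "\<dots> \<le> (\<Sum>e\<in>pe p1. c e (x e))"
      proof (rule member_le_sum)
        have sub: "pe p1 \<subseteq> E" using peE p1 by auto
        show "e \<in> pe p1" using e by simp
        show "finite (pe p1)" using sub fE by (rule finite_subset)
        show "0 \<le> c i (x i)" if "i \<in> pe p1 - {e}" for i using that sub cnn x0 by auto
      qed
      also have "\<dots> = lam" by (simp add: lam_def pc_def')
      finally show ?thesis .
    qed
    have lam0: "0 < lam" using lam_lo clo0 Mp by (smt (verit) zero_less_power mult_pos_pos)
    have Lpos: "0 < social_cost E P pe c f" using Lf lam0 Mp by simp
    moreover have "(1 - \<eta>) * social_cost E P pe c f \<le> social_cost E P pe c g" if gf: "feasible P M g" for g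
    proof -
      define y where "y = load P pe g"
      have y0: "0 \<le> y e" "y e \<le> M" for e
        using load_nonneg[OF gf] load_le[OF fP gf] by (auto simp: y_def)
      have gnn: "\<forall>p\<in>P. 0 \<le> g p" and gsum: "(\<Sum>p\<in>P. g p) = M" using gf by (auto simp: feasible_def)
      define w where "w e = K * min (c e (x e)) lam" for e
      have w0: "0 \<le> w e" if "e \<in> E" for e using cnn[OF that x0(1)] lam0 K1 by (simp add: w_def)
      have wle: "w e \<le> K * c e (x e)" for e using K1 by (simp add: w_def)
      have wle2: "w e \<le> K * lam" for e using K1 by (simp add: w_def)
      have G1: "K * lam * M \<le> (\<Sum>e\<in>E. y e * w e)"
      proof -
        have "(\<Sum>e\<in>E. y e * w e) = (\<Sum>p\<in>P. g p * (\<Sum>e\<in>pe p. w e))"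
          unfolding y_def by (rule load_swap[OF fP fE peE])
        also have "\<dots> \<ge> (\<Sum>p\<in>P. g p * (K * lam))"
        proof (rule sum_mono)
          fix p assume p: "p \<in> P"
          have fpe: "finite (pe p)" using p peE fE by (auto intro: finite_subset)
          have "K * lam \<le> (\<Sum>e\<in>pe p. w e)"
          proof (cases "\<exists>e\<in>pe p. lam \<le> c e (x e)")
            case True
            then obtain e where e: "e \<in> pe p" "lam \<le> c e (x e)" by blast
            have "K * lam = w e" using e by (simp add: w_def)
            also have "\<dots> \<le> (\<Sum>e\<in>pe p. w e)"
              using e fpe w0 p peE by (intro member_le_sum) auto
            finally show ?thesis .
          next
            case False
            hence "(\<Sum>e\<in>pe p. w e) = (\<Sum>e\<in>pe p. K * c e (x e))"
              by (intro sum.cong) (auto simp: w_def)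
            also have "\<dots> = K * path_cost P pe c f p" by (simp add: pc_def' sum_distrib_left)
            finally show ?thesis using lam_le[OF p] K1 by simp
          qed
          thus "g p * (K * lam) \<le> g p * (\<Sum>e\<in>pe p. w e)" using gnn p by (intro mult_left_mono) auto
        qed
        also have "(\<Sum>p\<in>P. g p * (K * lam)) = (\<Sum>p\<in>P. g p) * (K * lam)"
          by (rule sum_distrib_right[symmetric])
        also have "\<dots> = K * lam * M" using gsum by simp
        finally show ?thesis by simp
      qed
      have G2: "y e * (w e - c e (y e)) \<le> real ds * (x e * c e (x e)) + \<theta> * M ^ Suc ds"
        if eE: "e \<in> E" for e
      proof -
        have rnn: "0 \<le> real ds * (x e * c e (x e)) + \<theta> * M ^ Suc ds"
          using cnn[OF eE x0(1)] x0 th0 Mp by (intro add_nonneg_nonneg mult_nonneg_nonneg) auto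
        have cy0: "0 \<le> c e (y e)" using cnn[OF eE y0(1)] .
        show ?thesis
        proof (cases "e \<in> Z")
          case True
          hence "c e (x e) = 0" using Zz x0[of e] C1 by auto
          hence "w e = 0" using lam0 by (simp add: w_def)
          hence "y e * (w e - c e (y e)) \<le> 0" using cy0 y0 by (simp add: mult_nonneg_nonneg)
          thus ?thesis using rnn by linarith
        next
          case False
          hence eEZ: "e \<in> E - Z" using eE by auto
          have ad: "\<alpha> e > 0" using abnd eEZ alo by force
          have esx: "\<bar>c e (x e) - \<alpha> e * x e ^ d e\<bar> \<le> B * x e ^ Suc (d e)" using est eEZ x0(1)[of e] order_trans[OF x0(2)[of e] C1(1)] by blast
          have esy: "\<bar>c e (y e) - \<alpha> e * y e ^ d e\<bar> \<le> B * y e ^ Suc (d e)" using est eEZ y0(1)[of e] order_trans[OF y0(2)[of e] C1(1)] by blast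
          consider "d e = ds" | "ds < d e" | "d e < ds" by linarith
          thus ?thesis
          proof cases
            case 1
            show ?thesis
              using dstar_edge[OF x0 y0 C1(2) B ad, where K=K and w="w e" and cv="c e (x e)" and cy="c e (y e)" and \<theta>=\<theta> and dd=ds]
                 K_def wle esx esy C3 1 by (auto simp: abs_le_iff)
          next
            case 2
            have "y e * (w e - c e (y e)) \<le> y e * w e" using cy0 y0 by (simp add: algebra_simps mult_nonneg_nonneg)
            also have "\<dots> \<le> M * (K * ((\<alpha>hi + B) * M ^ Suc ds))"
            proof (intro mult_mono)
              have "c e (x e) \<le> (\<alpha>hi + B) * x e ^ d e" using upper eEZ x0 by auto
              also have "\<dots> \<le> (\<alpha>hi + B) * M ^ d e" using x0 B ahi by (intro mult_left_mono power_mono) auto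
              also have "\<dots> \<le> (\<alpha>hi + B) * M ^ Suc ds"
                using 2 C1 Mp B ahi by (intro mult_left_mono power_decreasing) auto
              finally show "w e \<le> K * ((\<alpha>hi + B) * M ^ Suc ds)" using wle[of e] K1
                by (smt (verit) mult_left_mono)
            qed (use y0 Mp w0 eE in auto)
            also have "\<dots> = (K * (\<alpha>hi + B) * M) * M ^ Suc ds" by (simp add: algebra_simps)
            also have "\<dots> \<le> \<theta> * M ^ Suc ds" using C4 Mp by (intro mult_right_mono) auto
            finally show ?thesis using cnn[OF eE x0(1)] x0 by (smt (verit) mult_nonneg_nonneg of_nat_0_le_iff)
          next
            case 3
            show ?thesis
            proof (cases "w e \<le> c e (y e)")
              case True
              hence "y e * (w e - c e (y e)) \<le> 0" using y0 by (simp add: mult_nonneg_nonpos)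
              thus ?thesis using rnn by linarith
            next
              case cyw: False
              have "y e \<le> \<epsilon>' * M"
              proof (rule ccontr)
                assume "\<not> y e \<le> \<epsilon>' * M"
                hence ye: "\<epsilon>' * M < y e" by simp
                have "(\<alpha>lo / 2) * (\<epsilon>' ^ ds * M ^ d e) \<le> (\<alpha>lo / 2) * (\<epsilon>' ^ d e * M ^ d e)"
                  using 3 ep0 alo Mp by (intro mult_left_mono mult_right_mono power_decreasing) auto
                also have "\<dots> = (\<alpha>lo / 2) * (\<epsilon>' * M) ^ d e" by (simp add: power_mult_distrib)
                also have "\<dots> \<le> (\<alpha>lo / 2) * y e ^ d e"
                  using ye ep0 Mp alo by (intro mult_left_mono power_mono) auto
                also have "\<dots> \<le> c e (y e)" using lower eEZ y0 by auto
                also have "\<dots> < w e" using cyw by simp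
                also have "\<dots> \<le> K * (cup * M ^ ds)" using wle2[of e] lam_up K1
                  by (smt (verit) mult_left_mono)
                also have "\<dots> \<le> K * (cup * (M * M ^ d e))"
                proof -
                  have "M ^ ds \<le> M ^ Suc (d e)" using 3 C1 Mp by (intro power_decreasing) auto
                  thus ?thesis using K1 cup0 by (simp add: mult_left_mono)
                qed
                finally have "(\<alpha>lo / 2 * \<epsilon>' ^ ds) * M ^ d e < (K * cup * M) * M ^ d e"
                  by (simp add: algebra_simps)
                hence "\<alpha>lo / 2 * \<epsilon>' ^ ds < K * cup * M"
                  using Mp by (simp add: mult_less_cancel_right)
                thus False using C5 by simp
              qed
              have "y e * (w e - c e (y e)) \<le> y e * w e" using cy0 y0 by (simp add: algebra_simps mult_nonneg_nonneg)
              also have "\<dots> \<le> (\<epsilon>' * M) * (K * (cup * M ^ ds))"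
                using \<open>y e \<le> \<epsilon>' * M\<close> wle2[of e] lam_up K1 y0 w0[OF eE]
                by (intro mult_mono) (auto intro: order_trans simp: mult_left_mono)
              also have "\<dots> = (\<epsilon>' * K * cup) * M ^ Suc ds" by (simp add: algebra_simps)
              also have "\<dots> \<le> \<theta> * M ^ Suc ds"
              proof -
                have "\<epsilon>' \<le> \<theta> / (K * cup)" by (simp add: \<epsilon>'_def)
                hence "\<epsilon>' * K * cup \<le> \<theta>" using K1 cup0 by (simp add: field_simps)
                thus ?thesis using Mp by (intro mult_right_mono) auto
              qed
              finally show ?thesis using cnn[OF eE x0(1)] x0 by (smt (verit) mult_nonneg_nonneg of_nat_0_le_iff)
            qed
          qed
        qed
      qed
      have "social_cost E P pe c g = (\<Sum>e\<in>E. y e * w e - y e * (w e - c e (y e)))"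
        by (simp add: social_cost_def y_def algebra_simps)
      also have "\<dots> = (\<Sum>e\<in>E. y e * w e) - (\<Sum>e\<in>E. y e * (w e - c e (y e)))"
        by (simp add: sum_subtractf)
      also have "\<dots> \<ge> K * lam * M - (\<Sum>e\<in>E. real ds * (x e * c e (x e)) + \<theta> * M ^ Suc ds)"
        using G1 sum_mono[of E "\<lambda>e. y e * (w e - c e (y e))", OF G2] by linarith
      also have "(\<Sum>e\<in>E. real ds * (x e * c e (x e)) + \<theta> * M ^ Suc ds)
          = real ds * (lam * M) + nE * \<theta> * M ^ Suc ds"
        using Lf by (simp add: sum.distrib sum_distrib_left[symmetric] social_cost_def x_def nE_def)
      finally have "K * lam * M - (real ds * (lam * M) + nE * \<theta> * M ^ Suc ds) \<le> social_cost E P pe c g" .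
      moreover have "K * lam * M - (real ds * (lam * M) + nE * \<theta> * M ^ Suc ds) = lam * M - nE * \<theta> * M ^ Suc ds"
        by (simp add: K_def algebra_simps)
      moreover have "nE * \<theta> * M ^ Suc ds \<le> \<eta> * (lam * M)"
      proof -
        have "nE * \<theta> \<le> \<eta> * clo" using nE0 eta clo0 by (simp add: \<theta>_def field_simps)
        hence "nE * \<theta> * M ^ Suc ds \<le> \<eta> * clo * M ^ Suc ds" using Mp by (intro mult_right_mono) auto
        also have "\<dots> = \<eta> * ((clo * M ^ ds) * M)" by (simp add: algebra_simps)
        also have "\<dots> \<le> \<eta> * (lam * M)" using lam_lo eta Mp by (intro mult_left_mono mult_right_mono) auto
        finally show ?thesis .
      qed
      ultimately show ?thesis using Lf by (simp add: algebra_simps)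
    qed
    ultimately show "0 < social_cost E P pe c f \<and>
     (\<forall>g. feasible P M g \<longrightarrow> (1 - \<eta>) * social_cost E P pe c f \<le> social_cost E P pe c g)" by blast
  qed
  ultimately show ?thesis by blast
qed

lemma social_nonneg:
  assumes "\<forall>e\<in>E. \<forall>x\<ge>0. 0 \<le> c e x" "feasible P M g"
  shows "0 \<le> social_cost E P pe c g"
  unfolding social_cost_def
proof (intro sum_nonneg mult_nonneg_nonneg)
  fix e assume e: "e \<in> E"
  show "0 \<le> load P pe g e" by (rule load_nonneg[OF assms(2)])
  thus "0 \<le> c e (load P pe g e)" using assms(1) e by blast
qed

theorem corollary4p4:
  fixes E :: "'e set" and P :: "'p set" and pe :: "'p \<Rightarrow> 'e set"
    and c :: "'e \<Rightarrow> real \<Rightarrow> real"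
  assumes "finite E" and "finite P" and "P \<noteq> {}"
    and "\<forall>p\<in>P. pe p \<subseteq> E"
    and "\<forall>e\<in>E. continuous_on {0..} (c e)"
    and "\<forall>e\<in>E. mono_on {0..} (c e)"
    and "\<forall>e\<in>E. \<forall>x\<ge>0. 0 \<le> c e x"
    and "\<forall>e\<in>E. analytic_at_zero (c e)"
  shows "\<forall>\<epsilon>>0. \<exists>M0>0. \<forall>M f. 0 < M \<and> M < M0 \<and> wardrop_eq P pe c M f
           \<longrightarrow> \<bar>poa E P pe c M f - 1\<bar> < \<epsilon>"
proof (intro allI impI)
  fix \<epsilon> :: real assume eps: "0 < \<epsilon>"
  note fE = assms(1) and fP = assms(2) and Pne = assms(3) and peE = assms(4)
    and nn = assms(7) and an = assms(8)
  define Z where "Z = {e\<in>E. \<exists>\<rho>>0. \<forall>y. 0 \<le> y \<and> y \<le> \<rho> \<longrightarrow> c e y = 0}"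
  have qex: "\<forall>e\<in>E-Z. \<exists>q::nat \<times> real \<times> real \<times> real. 0 < fst (snd q) \<and> 0 \<le> fst (snd (snd q)) \<and> 0 < snd (snd (snd q)) \<and>
        (\<forall>y. 0 \<le> y \<and> y \<le> snd (snd (snd q)) \<longrightarrow> \<bar>c e y - fst (snd q) * y ^ fst q\<bar> \<le> fst (snd (snd q)) * y ^ Suc (fst q))"
  proof
    fix e assume e: "e \<in> E - Z"
    have "\<exists>d \<alpha> B \<rho>. 0 < \<alpha> \<and> 0 \<le> B \<and> 0 < \<rho> \<and>
        (\<forall>y. 0 \<le> y \<and> y \<le> \<rho> \<longrightarrow> \<bar>c e y - \<alpha> * y ^ d\<bar> \<le> B * y ^ Suc d)"
    proof -
      have eE: "e \<in> E" and nz: "\<not> (\<exists>\<rho>>0. \<forall>y. 0 \<le> y \<and> y \<le> \<rho> \<longrightarrow> c e y = 0)"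
        using e by (auto simp: Z_def)
      have "analytic_at_zero (c e)" using an eE by blast
      moreover have "\<forall>y\<ge>0. 0 \<le> c e y" using nn eE by blast
      ultimately show ?thesis using edge_profile[of "c e"] nz by blast
    qed
    then obtain d0 \<alpha>0 B0 \<rho>0' where "0 < \<alpha>0 \<and> 0 \<le> B0 \<and> 0 < \<rho>0' \<and>
        (\<forall>y. 0 \<le> y \<and> y \<le> \<rho>0' \<longrightarrow> \<bar>c e y - \<alpha>0 * y ^ d0\<bar> \<le> B0 * y ^ Suc d0)" by blast
    thus "\<exists>q::nat \<times> real \<times> real \<times> real. 0 < fst (snd q) \<and> 0 \<le> fst (snd (snd q)) \<and> 0 < snd (snd (snd q)) \<and>
        (\<forall>y. 0 \<le> y \<and> y \<le> snd (snd (snd q)) \<longrightarrow> \<bar>c e y - fst (snd q) * y ^ fst q\<bar> \<le> fst (snd (snd q)) * y ^ Suc (fst q))"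
      by (intro exI[of _ "(d0, \<alpha>0, B0, \<rho>0')"]) simp
  qed
  obtain q where q: "\<forall>e\<in>E-Z. 0 < fst (snd (q e)) \<and> 0 \<le> fst (snd (snd (q e))) \<and> 0 < snd (snd (snd (q e))) \<and>
        (\<forall>y. 0 \<le> y \<and> y \<le> snd (snd (snd (q e))) \<longrightarrow> \<bar>c e y - fst (snd (q e)) * y ^ fst (q e)\<bar> \<le> fst (snd (snd (q e))) * y ^ Suc (fst (q e)))"
    using bchoice[OF qex] by blast
  define d where "d e = fst (q e)" for e
  define \<alpha> where "\<alpha> e = fst (snd (q e))" for e
  define Bf where "Bf e = fst (snd (snd (q e)))" for e
  define \<rho>f where "\<rho>f e = snd (snd (snd (q e)))" for e
  have prof: "\<forall>e\<in>E-Z. 0 < \<alpha> e \<and> 0 \<le> Bf e \<and> 0 < \<rho>f e \<and>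
        (\<forall>y. 0 \<le> y \<and> y \<le> \<rho>f e \<longrightarrow> \<bar>c e y - \<alpha> e * y ^ d e\<bar> \<le> Bf e * y ^ Suc (d e))"
    using q unfolding d_def \<alpha>_def Bf_def \<rho>f_def .
  have "\<forall>e\<in>Z. \<exists>\<rho>>0. \<forall>y. 0 \<le> y \<and> y \<le> \<rho> \<longrightarrow> c e y = 0" by (auto simp: Z_def)
  then obtain \<rho>z where rz: "\<forall>e\<in>Z. 0 < \<rho>z e \<and> (\<forall>y. 0 \<le> y \<and> y \<le> \<rho>z e \<longrightarrow> c e y = 0)"
    using bchoice[of Z "\<lambda>e \<rho>. 0 < \<rho> \<and> (\<forall>y. 0 \<le> y \<and> y \<le> \<rho> \<longrightarrow> c e y = 0)"] by blast
  have fZ: "finite Z" "finite (E - Z)" using fE by (auto simp: Z_def)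
  define \<rho>0 where "\<rho>0 = Min (insert 1 (\<rho>z ` Z \<union> \<rho>f ` (E - Z)))"
  define B where "B = Max (insert 0 (Bf ` (E - Z)))"
  define \<alpha>lo where "\<alpha>lo = Min (insert 1 (\<alpha> ` (E - Z)))"
  define \<alpha>hi where "\<alpha>hi = Max (insert 0 (\<alpha> ` (E - Z)))"
  have \<rho>0: "0 < \<rho>0" "\<rho>0 \<le> 1" using fZ rz prof by (auto simp: \<rho>0_def)
  have \<rho>0z: "\<rho>0 \<le> \<rho>z e" if "e \<in> Z" for e using fZ that by (auto simp: \<rho>0_def)
  have \<rho>0f: "\<rho>0 \<le> \<rho>f e" if "e \<in> E - Z" for e using fZ that by (auto simp: \<rho>0_def)
  have B: "0 \<le> B" using fZ by (auto simp: B_def)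
  have Bf: "Bf e \<le> B" if "e \<in> E - Z" for e using fZ that by (auto simp: B_def)
  have alo: "0 < \<alpha>lo" using fZ prof by (auto simp: \<alpha>lo_def)
  have ahi: "0 \<le> \<alpha>hi" using fZ by (auto simp: \<alpha>hi_def)
  have abnd: "\<forall>e\<in>E-Z. \<alpha>lo \<le> \<alpha> e \<and> \<alpha> e \<le> \<alpha>hi" using fZ by (auto simp: \<alpha>lo_def \<alpha>hi_def)
  have Zz: "\<forall>e\<in>Z. \<forall>y. 0 \<le> y \<and> y \<le> \<rho>0 \<longrightarrow> c e y = 0"
  proof (intro ballI allI impI)
    fix e y assume e: "e \<in> Z" and y: "0 \<le> y \<and> y \<le> \<rho>0"
    have "y \<le> \<rho>z e" using \<rho>0z[OF e] y by linarith
    moreover have "\<forall>y. 0 \<le> y \<and> y \<le> \<rho>z e \<longrightarrow> c e y = 0" using rz e by blast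
    ultimately show "c e y = 0" using y by blast
  qed
  have est: "\<forall>e\<in>E-Z. \<forall>y. 0 \<le> y \<and> y \<le> \<rho>0 \<longrightarrow> \<bar>c e y - \<alpha> e * y ^ d e\<bar> \<le> B * y ^ Suc (d e)"
  proof (intro ballI allI impI)
    fix e y assume e: "e \<in> E - Z" and y: "0 \<le> y \<and> y \<le> \<rho>0"
    have "\<bar>c e y - \<alpha> e * y ^ d e\<bar> \<le> Bf e * y ^ Suc (d e)"
    proof -
      have "y \<le> \<rho>f e" using \<rho>0f[OF e] y by linarith
      moreover have "\<forall>y. 0 \<le> y \<and> y \<le> \<rho>f e \<longrightarrow> \<bar>c e y - \<alpha> e * y ^ d e\<bar> \<le> Bf e * y ^ Suc (d e)"
        using prof e by blast
      ultimately show ?thesis using y by blast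
    qed
    also have "\<dots> \<le> B * y ^ Suc (d e)" using Bf[OF e] y by (intro mult_right_mono) auto
    finally show "\<bar>c e y - \<alpha> e * y ^ d e\<bar> \<le> B * y ^ Suc (d e)" .
  qed
  show "\<exists>M0>0. \<forall>M f. 0 < M \<and> M < M0 \<and> wardrop_eq P pe c M f
           \<longrightarrow> \<bar>poa E P pe c M f - 1\<bar> < \<epsilon>"
  proof (cases "\<exists>p0\<in>P. pe p0 \<subseteq> Z")
    case True
    then obtain p0 where p0: "p0 \<in> P" "pe p0 \<subseteq> Z" by blast
    have "\<forall>M f. 0 < M \<and> M < \<rho>0 \<and> wardrop_eq P pe c M f \<longrightarrow> \<bar>poa E P pe c M f - 1\<bar> < \<epsilon>"
    proof (intro allI impI)
      fix M f assume H: "0 < M \<and> M < \<rho>0 \<and> wardrop_eq P pe c M f"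
      define g where "g p = (if p = p0 then M else 0)" for p
      have gf: "feasible P M g" using H p0 fP by (auto simp: feasible_def g_def)
      have lg: "load P pe g e = (if e \<in> pe p0 then M else 0)" for e
        unfolding load_def g_def using fP p0 by (simp add: sum.delta')
      have "social_cost E P pe c g = 0"
        unfolding social_cost_def
      proof (rule sum.neutral, intro ballI)
        fix e assume "e \<in> E"
        show "load P pe g e * c e (load P pe g e) = 0"
        proof (cases "e \<in> pe p0")
          case True thus ?thesis using lg Zz p0 H by auto
        qed (simp add: lg)
      qed
      hence "opt_cost E P pe c M \<le> 0"
        unfolding opt_cost_def using gf
        by (intro cInf_lower2[of "social_cost E P pe c g"] bdd_belowI[of _ 0])
           (auto intro: social_nonneg[OF nn])
      hence "poa E P pe c M f = 1" by (simp add: poa_def)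
      thus "\<bar>poa E P pe c M f - 1\<bar> < \<epsilon>" using eps by simp
    qed
    thus ?thesis using \<rho>0 by blast
  next
    case False
    hence ex: "\<forall>p\<in>P. \<exists>e\<in>pe p. e \<notin> Z" by blast
    define Dm where "Dm = Max (insert 0 (d ` (E - Z)))"
    define S where "S = {n. \<exists>p\<in>P. \<forall>e\<in>pe p. e \<in> Z \<or> n \<le> d e}"
    have Sb: "S \<subseteq> {..Dm}"
    proof
      fix n assume "n \<in> S"
      then obtain p where p: "p \<in> P" "\<forall>e\<in>pe p. e \<in> Z \<or> n \<le> d e" by (auto simp: S_def)
      then obtain e where e: "e \<in> pe p" "e \<notin> Z" using ex by blast
      hence "e \<in> E - Z" using peE p by auto
      hence "d e \<le> Dm" using fZ by (auto simp: Dm_def)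
      moreover have "n \<le> d e" using p(2) e by blast
      ultimately show "n \<in> {..Dm}" by simp
    qed
    have fS: "finite S" using Sb finite_subset by blast
    have "0 \<in> S" using Pne by (auto simp: S_def)
    define ds where "ds = Max S"
    have "ds \<in> S" unfolding ds_def using fS \<open>0 \<in> S\<close> by (intro Max_in) auto
    then obtain p0 where p0: "p0 \<in> P" "\<forall>e\<in>pe p0. e \<in> Z \<or> ds \<le> d e" by (auto simp: S_def)
    have cut: "\<forall>p\<in>P. \<exists>e\<in>pe p. e \<notin> Z \<and> d e \<le> ds"
    proof (rule ccontr)
      assume "\<not> ?thesis"
      then obtain p where p: "p \<in> P" "\<forall>e\<in>pe p. \<not> (e \<notin> Z \<and> d e \<le> ds)" by blast
      hence "\<forall>e\<in>pe p. e \<in> Z \<or> Suc ds \<le> d e" by auto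
      hence "Suc ds \<in> S" using p(1) unfolding S_def by blast
      hence "Suc ds \<le> ds" using fS by (simp add: ds_def)
      thus False by simp
    qed
    define \<eta> where "\<eta> = min (1/2) (\<epsilon>/4)"
    have eta: "0 < \<eta>" "\<eta> \<le> 1/2" "\<eta> \<le> \<epsilon>/4" using eps by (auto simp: \<eta>_def)
    obtain M0 where M0: "M0 > 0" and MB: "\<forall>M f. 0 < M \<and> M < M0 \<and> wardrop_eq P pe c M f \<longrightarrow>
       0 < social_cost E P pe c f \<and>
       (\<forall>g. feasible P M g \<longrightarrow> (1 - \<eta>) * social_cost E P pe c f \<le> social_cost E P pe c g)"
      using main_caseB[OF fE fP Pne peE nn Zz est \<rho>0 B alo ahi abnd p0 cut eta(1)] by blast
    have "\<forall>M f. 0 < M \<and> M < M0 \<and> wardrop_eq P pe c M f \<longrightarrow> \<bar>poa E P pe c M f - 1\<bar> < \<epsilon>"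
    proof (intro allI impI)
      fix M f assume H: "0 < M \<and> M < M0 \<and> wardrop_eq P pe c M f"
      define Lf where "Lf = social_cost E P pe c f"
      define Opt where "Opt = opt_cost E P pe c M"
      have Lp: "0 < Lf" and lb: "\<forall>g. feasible P M g \<longrightarrow> (1 - \<eta>) * Lf \<le> social_cost E P pe c g"
        using MB H by (auto simp: Lf_def)
      have ff: "feasible P M f" using H by (simp add: wardrop_eq_def)
      have ne: "social_cost E P pe c ` {f. feasible P M f} \<noteq> {}" using ff by blast
      have lbs: "\<And>z. z \<in> social_cost E P pe c ` {f. feasible P M f} \<Longrightarrow> (1 - \<eta>) * Lf \<le> z"
        using lb by blast
      have O1: "(1 - \<eta>) * Lf \<le> Opt"
        unfolding Opt_def opt_cost_def by (rule cInf_greatest[OF ne lbs])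
      have bdd: "bdd_below (social_cost E P pe c ` {f. feasible P M f})"
        by (rule bdd_belowI[of _ "(1 - \<eta>) * Lf"]) (rule lbs)
      have mem: "Lf \<in> social_cost E P pe c ` {f. feasible P M f}" using ff by (simp add: Lf_def)
      have O2: "Opt \<le> Lf"
        unfolding Opt_def opt_cost_def by (rule cInf_lower[OF mem bdd])
      have "0 < (1 - \<eta>) * Lf" using Lp eta by simp
      hence Op: "0 < Opt" using O1 by linarith
      hence pv: "poa E P pe c M f = Lf / Opt" by (simp add: poa_def Lf_def Opt_def)
      have "1 \<le> Lf / Opt" using O2 Op by simp
      moreover have "Lf / Opt - 1 < \<epsilon>"
      proof -
        have "Lf / Opt - 1 = (Lf - Opt) / Opt" using Op by (simp add: field_simps)
        also have "\<dots> \<le> (\<eta> * Lf) / Opt" using O1 Op by (intro divide_right_mono) (auto simp: algebra_simps)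
        also have "\<dots> \<le> (\<eta> * Lf) / ((1 - \<eta>) * Lf)"
        proof (rule divide_left_mono[OF O1])
          show "0 \<le> \<eta> * Lf" using eta Lp by simp
          show "0 < Opt * ((1 - \<eta>) * Lf)" using Op \<open>0 < (1 - \<eta>) * Lf\<close> by simp
        qed
        also have "\<dots> = \<eta> / (1 - \<eta>)" using Lp by simp
        also have "\<dots> \<le> 2 * \<eta>" using eta by (simp add: field_simps)
        also have "\<dots> < \<epsilon>" using eta eps by simp
        finally show ?thesis .
      qed
      ultimately show "\<bar>poa E P pe c M f - 1\<bar> < \<epsilon>" using pv by simp
    qed
    thus ?thesis using M0 by blast
  qed
qed

end
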